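(* Let $k\in\mathbb N$, $k\ge1$. Then the polynomial $2^{2(k-1)}(a^{2k}-b^{2k})^2-(a^2-b^2)^{2k}\in\mathbb R[a,b]$ is a sum of squares of polynomials (of degree at most $2k$). *)

theory Defs
  imports "HOL-Computational_Algebra.Polynomial"
begin

text \<open>Bivariate real polynomials R[a,b] are represented as R[a][b], i.e. the type
  real poly poly: the outer variable is b, coefficients are polynomials in a.\<close>

definition var_a :: "real poly poly" where
  "var_a = [:[:0, 1:]:]"

definition var_b :: "real poly poly" where
  "var_b = [:0, 1:]"

definition total_degree :: "real poly poly \<Rightarrow> nat" where
  "total_degree p =
     (if p = 0 then 0
      else Max ((\<lambda>i. i + degree (coeff p i)) ` {i. coeff p i \<noteq> 0}))"

end

theory Submission
  imports Defs
begin

definition dd :: "nat \<Rightarrow> nat \<Rightarrow> nat \<Rightarrow> int" where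
  "dd n i j = 4^n - (-1)^(n-i) * (-1)^(n-j) * int (n choose i) * int (n choose j)"

lemma dd_nonneg: "dd n i j \<ge> 0"
proof -
  have a: "int (n choose i) \<le> 2^n" "int (n choose j) \<le> 2^n"
    using binomial_le_pow2 by (metis of_nat_le_iff of_nat_numeral of_nat_power)+
  have "\<bar>(-1)^(n-i) * (-1)^(n-j) * int (n choose i) * int (n choose j)\<bar>
        = int (n choose i) * int (n choose j)" by (simp add: abs_mult)
  also have "\<dots> \<le> 2^n * 2^n" using a by (intro mult_mono) auto
  also have "\<dots> = 4^n" by (simp flip: power_mult_distrib)
  finally show ?thesis unfolding dd_def by linarith
qed

lemma trm:
  fixes x y :: "'a::comm_ring_1"
  shows "4^n * (x^i * y^(n-i) * (x^j * y^(n-j))) -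
     of_nat (n choose i) * x^i * (-y)^(n-i) * (of_nat (n choose j) * x^j * (-y)^(n-j))
   = of_int (dd n i j) * (x^(i+j) * y^((n-i)+(n-j)))"
proof -
  define P where "P = x^i * y^(n-i) * (x^j * y^(n-j))"
  have e1: "x^(i+j) * y^((n-i)+(n-j)) = P" unfolding P_def power_add by (simp add: mult_ac)
  have e2: "of_nat (n choose i) * x^i * (-y)^(n-i) * (of_nat (n choose j) * x^j * (-y)^(n-j))
     = ((-1)^(n-i) * (-1)^(n-j) * of_nat (n choose i) * of_nat (n choose j)) * P"
    unfolding P_def power_minus[of y] by (simp only: mult_ac)
  have e3: "of_int (dd n i j) = (4::'a)^n - (-1)^(n-i) * (-1)^(n-j) * of_nat (n choose i) * of_nat (n choose j)"
    unfolding dd_def by simp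
  show ?thesis unfolding e1 e2 e3 P_def[symmetric] by (simp only: left_diff_distrib)
qed

lemma key:
  fixes x y :: "'a::comm_ring_1"
  shows "4^n * (x^(n+1) - y^(n+1))^2 - (x-y)^(2*n+2)
     = (\<Sum>i\<le>n. \<Sum>j\<le>n. of_int (dd n i j) * ((x-y)^2 * (x^(i+j) * y^((n-i)+(n-j)))))"
proof -
  define S where "S = (\<Sum>i\<le>n. x^i * y^(n-i))"
  have S: "x^(n+1) - y^(n+1) = (x-y)*S"
    unfolding S_def using power_diff_sumr2[of x "n+1" y]
    by (simp add: lessThan_Suc_atMost mult.commute)
  have B: "(x-y)^n = (\<Sum>i\<le>n. of_nat (n choose i) * x^i * (-y)^(n-i))"
    using binomial_ring[of x "-y" n] by simp
  have "4^n * (x^(n+1) - y^(n+1))^2 - (x-y)^(2*n+2)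
      = (x-y)^2 * (4^n * (S*S) - (x-y)^n * (x-y)^n)"
  proof -
    have e: "(x-y)^(2*n+2) = (x-y)^2 * ((x-y)^n * (x-y)^n)"
      by (simp flip: power_add add: mult_2)
    show ?thesis unfolding e S power_mult_distrib by (simp only: right_diff_distrib power2_eq_square mult_ac)
  qed
  also have "4^n * (S*S) - (x-y)^n * (x-y)^n =
     (\<Sum>i\<le>n. \<Sum>j\<le>n. of_int (dd n i j) * (x^(i+j) * y^((n-i)+(n-j))))"
  proof -
    have "4^n * (S*S) - (x-y)^n * (x-y)^n = (\<Sum>i\<le>n. \<Sum>j\<le>n. 4^n * (x^i * y^(n-i) * (x^j * y^(n-j)))) -
      (\<Sum>i\<le>n. \<Sum>j\<le>n. of_nat (n choose i) * x^i * (-y)^(n-i) * (of_nat (n choose j) * x^j * (-y)^(n-j)))"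
      unfolding B S_def sum_product by (simp only: sum_distrib_left)
    also have "\<dots> = (\<Sum>i\<le>n. \<Sum>j\<le>n. 4^n * (x^i * y^(n-i) * (x^j * y^(n-j))) -
       of_nat (n choose i) * x^i * (-y)^(n-i) * (of_nat (n choose j) * x^j * (-y)^(n-j)))"
      by (simp only: sum_subtractf)
    finally show ?thesis by (simp only: trm)
  qed
  finally have "4^n * (x^(n+1) - y^(n+1))^2 - (x-y)^(2*n+2) = (x-y)^2 *
     (\<Sum>i\<le>n. \<Sum>j\<le>n. of_int (dd n i j) * (x^(i+j) * y^((n-i)+(n-j))))" .
  also have "\<dots> = (\<Sum>i\<le>n. \<Sum>j\<le>n. of_int (dd n i j) * ((x-y)^2 * (x^(i+j) * y^((n-i)+(n-j)))))"
    unfolding sum_distrib_left by (intro sum.cong refl) (rule mult.left_commute)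
  finally show ?thesis .
qed

lemma Apow: "var_a ^ m = [:monom 1 m:]"
  unfolding var_a_def by (induction m) (auto simp: monom_Suc mult_monom)
lemma Bpow: "var_b ^ m = monom 1 m"
  unfolding var_b_def by (simp add: monom_altdef)
lemma qform: "[:[:s:]:] * (var_a^2 - var_b^2) * var_a^m * var_b^r
   = monom (monom s (m+2)) r - monom (monom s m) (r+2)"
  unfolding Apow Bpow
  by (simp add: algebra_simps mult_monom smult_monom)
lemma csq: "([:[:s:]:] :: real poly poly)^2 = [:[:s^2:]:]"
  by (simp add: power2_eq_square)
lemma ofint: "(of_int d :: real poly poly) = [:[:of_int d:]:]"
  by (simp add: of_int_poly)

lemma total_degree_le:
  assumes "\<And>t. coeff p t \<noteq> 0 \<Longrightarrow> t + degree (coeff p t) \<le> d"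
  shows "total_degree p \<le> d"
proof (cases "p = 0")
  case True then show ?thesis by (simp add: total_degree_def)
next
  case False
  have fin: "finite {i. coeff p i \<noteq> 0}"
    by (rule finite_subset[of _ "{..degree p}"]) (auto intro: le_degree)
  have ne: "{i. coeff p i \<noteq> 0} \<noteq> {}" using False by (metis (mono_tags) empty_Collect_eq leading_coeff_0_iff)
  show ?thesis unfolding total_degree_def using False fin ne assms
    by (simp add: Max_le_iff)
qed

lemma q_deg: "total_degree ([:[:s:]:] * (var_a^2 - var_b^2) * var_a^m * var_b^r) \<le> m + r + 2"
  unfolding qform
proof (rule total_degree_le)
  fix t
  assume "coeff (monom (monom s (m + 2)) r - monom (monom s m) (r + 2)) t \<noteq> 0"
  then have "t = r \<or> t = r + 2" by (auto simp: coeff_monom split: if_splits)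
  then show "t + degree (coeff (monom (monom s (m + 2)) r - monom (monom s m) (r + 2)) t) \<le> m + r + 2"
  proof
    assume "t = r"
    then show ?thesis using degree_monom_le[of s "m+2"] by (simp add: coeff_monom)
  next
    assume "t = r + 2"
    then show ?thesis using degree_monom_le[of s m] by (simp add: coeff_monom)
  qed
qed

theorem mainTheorem18:
  fixes k :: nat
  assumes "k \<ge> 1"
  shows "\<exists>qs :: real poly poly list.
           2 ^ (2 * (k - 1)) * (var_a ^ (2 * k) - var_b ^ (2 * k)) ^ 2
             - (var_a ^ 2 - var_b ^ 2) ^ (2 * k)
           = (\<Sum>q\<leftarrow>qs. q ^ 2)
         \<and> (\<forall>q\<in>set qs. total_degree q \<le> 2 * k)"
proof -
  define n where "n = k - 1"
  have k: "k = n + 1" using assms n_def by simp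
  define q where "q = (\<lambda>(i,j). [:[:sqrt (of_int (dd n i j)):]:] * (var_a^2 - var_b^2)
      * var_a^(i+j) * var_b^((n-i)+(n-j)))"
  define qs where "qs = map q (List.product [0..<n+1] [0..<n+1])"
  have qsq: "q (i,j) ^ 2 = of_int (dd n i j) * ((var_a^2 - var_b^2)^2 * ((var_a^2)^(i+j) * (var_b^2)^((n-i)+(n-j))))"
    for i j
  proof -
    have "q (i,j) ^ 2 = [:[:sqrt (of_int (dd n i j)):]:]^2 * ((var_a^2 - var_b^2)^2 * ((var_a^2)^(i+j) * (var_b^2)^((n-i)+(n-j))))"
    proof -
      have g: "\<And>c D a b :: real poly poly. (c*D*a*b)^2 = c^2 * (D^2 * (a^2 * b^2))"
        by (simp add: power_mult_distrib mult_ac)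
      have sw: "\<And>a :: real poly poly. \<And>m. (a^m)^2 = (a^2)^m"
        by (metis power_mult mult.commute)
      show ?thesis unfolding q_def split g sw ..
    qed
    also have "[:[:sqrt (of_int (dd n i j)):]:]^2 = of_int (dd n i j)"
      unfolding csq ofint using dd_nonneg[of n i j] by simp
    finally show ?thesis .
  qed
  have "(\<Sum>q\<leftarrow>qs. q ^ 2) = (\<Sum>p\<in>{..n}\<times>{..n}. q p ^ 2)"
  proof -
    have "(\<Sum>q\<leftarrow>qs. q ^ 2) = (\<Sum>p\<leftarrow>List.product [0..<n+1] [0..<n+1]. q p ^ 2)"
      unfolding qs_def by (simp only: map_map o_def)
    also have "\<dots> = (\<Sum>p\<in>set (List.product [0..<n+1] [0..<n+1]). q p ^ 2)"
      by (rule sum_list_distinct_conv_sum_set) (simp add: distinct_product)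
    also have "set (List.product [0..<n+1] [0..<n+1]) = {..n}\<times>{..n}"
      by auto
    finally show ?thesis .
  qed
  also have "\<dots> = (\<Sum>i\<le>n. \<Sum>j\<le>n. q (i,j) ^ 2)"
    by (simp add: sum.cartesian_product)
  also have "\<dots> = 4^n * ((var_a^2)^(n+1) - (var_b^2)^(n+1))^2 - (var_a^2 - var_b^2)^(2*n+2)"
    unfolding key qsq by simp
  also have "\<dots> = 2 ^ (2 * (k - 1)) * (var_a ^ (2 * k) - var_b ^ (2 * k)) ^ 2
             - (var_a ^ 2 - var_b ^ 2) ^ (2 * k)"
  proof -
    have "(var_a^2)^(n+1) = var_a^(2*k)" "(var_b^2)^(n+1) = var_b^(2*k)"
      by (simp_all add: k power_mult power2_eq_square)
    moreover have "(4::real poly poly)^n = 2^(2*(k-1))" by (simp add: k power_mult)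
    moreover have "2*n+2 = 2*k" by (simp add: k)
    ultimately show ?thesis by simp
  qed
  finally have eq: "2 ^ (2 * (k - 1)) * (var_a ^ (2 * k) - var_b ^ (2 * k)) ^ 2
             - (var_a ^ 2 - var_b ^ 2) ^ (2 * k) = (\<Sum>q\<leftarrow>qs. q ^ 2)" ..
  have deg: "\<forall>p\<in>set qs. total_degree p \<le> 2 * k"
  proof
    fix p assume "p \<in> set qs"
    then obtain i j where ij: "i \<le> n" "j \<le> n" "p = q (i,j)" unfolding qs_def by (auto simp del: upt_Suc simp: less_Suc_eq_le)
    have "total_degree p \<le> (i+j) + ((n-i)+(n-j)) + 2"
      unfolding ij q_def by (simp only: case_prod_conv q_deg)
    also have "\<dots> = 2 * k" using ij k by simp
    finally show "total_degree p \<le> 2 * k" .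
  qed
  show ?thesis using eq deg by blast
qed

end
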